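(* Let $k \geq 1$ and let $G$ be a graph that has the maximum atom-bond connectivity index among all graphs with $n$ vertices and vertex-connectivity $k$. Then $G \cong K_n(k)$.
   Context: All graphs are simple and undirected. For a graph $G$ and a vertex $v$, $d(v)$ denotes the degree of $v$. The atom-bond connectivity (ABC) index is ${\rm ABC}(G)=\sum_{uv\in E(G)} \sqrt{\frac{d(u)+d(v)-2}{d(u)d(v)}}$. For graphs $G,H$ on disjoint vertex sets, $G+H$ is their disjoint union, and the join $G\vee H$ is the graph on $V(G)\cup V(H)$ with edge set $E(G)\cup E(H)\cup\{uv: u\in V(G), v\in V(H)\}$. $K_n(k)$ denotes the graph $K_k \vee (K_1 + K_{n-k-1})$, i.e., the graph obtained from $K_{n-1}$ by adding one new vertex joined to exactly $k$ vertices of $K_{n-1}$. *)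

theory Defs
  imports Complex_Main
begin

definition simple_graph :: "'a set \<Rightarrow> ('a \<Rightarrow> 'a \<Rightarrow> bool) \<Rightarrow> bool" where
  "simple_graph V E \<longleftrightarrow> finite V \<and> (\<forall>u v. E u v \<longrightarrow> u \<in> V \<and> v \<in> V)
     \<and> (\<forall>u v. E u v \<longrightarrow> E v u) \<and> (\<forall>v. \<not> E v v)"

definition degree :: "'a set \<Rightarrow> ('a \<Rightarrow> 'a \<Rightarrow> bool) \<Rightarrow> 'a \<Rightarrow> nat" where
  "degree V E v = card {u \<in> V. E v u}"

text \<open>ABC index: sum over (unordered) edges uv of sqrt((d(u)+d(v)-2)/(d(u)d(v))).
Each unordered edge is counted twice as an ordered pair, hence the factor 1/2.\<close>
definition ABC :: "'a set \<Rightarrow> ('a \<Rightarrow> 'a \<Rightarrow> bool) \<Rightarrow> real" where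
  "ABC V E = (\<Sum>(u, v) \<in> {(u, v). u \<in> V \<and> v \<in> V \<and> E u v}.
      sqrt ((real (degree V E u) + real (degree V E v) - 2)
            / (real (degree V E u) * real (degree V E v)))) / 2"

definition connected_on :: "'a set \<Rightarrow> ('a \<Rightarrow> 'a \<Rightarrow> bool) \<Rightarrow> bool" where
  "connected_on W E \<longleftrightarrow> W \<noteq> {} \<and>
     (\<forall>u\<in>W. \<forall>v\<in>W. (\<lambda>x y. E x y \<and> x \<in> W \<and> y \<in> W)\<^sup>*\<^sup>* u v)"

text \<open>Vertex connectivity: minimum number of vertices whose removal leaves a
disconnected graph or a graph with at most one vertex (so kappa(K_n) = n-1).\<close>
definition vertex_connectivity :: "'a set \<Rightarrow> ('a \<Rightarrow> 'a \<Rightarrow> bool) \<Rightarrow> nat" where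
  "vertex_connectivity V E = (LEAST k. \<exists>S \<subseteq> V. card S = k \<and>
      (\<not> connected_on (V - S) E \<or> card (V - S) \<le> 1))"

text \<open>K_n(k) on vertex set {0..<n}: K_{n-1} on {0..<n-1} plus vertex n-1 joined
to exactly the k vertices 0..k-1.\<close>
definition Knk :: "nat \<Rightarrow> nat \<Rightarrow> nat \<Rightarrow> nat \<Rightarrow> bool" where
  "Knk n k u v \<longleftrightarrow> u < n \<and> v < n \<and> u \<noteq> v \<and>
     (u = n - 1 \<longrightarrow> v < k) \<and> (v = n - 1 \<longrightarrow> u < k)"

definition graph_iso :: "'a set \<Rightarrow> ('a \<Rightarrow> 'a \<Rightarrow> bool) \<Rightarrow> 'b set \<Rightarrow> ('b \<Rightarrow> 'b \<Rightarrow> bool) \<Rightarrow> bool" where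
  "graph_iso V E W F \<longleftrightarrow> (\<exists>f. bij_betw f V W \<and> (\<forall>u\<in>V. \<forall>v\<in>V. E u v \<longleftrightarrow> F (f u) (f v)))"

end

theory Submission
  imports Defs
begin

definition Rf :: "real \<Rightarrow> real \<Rightarrow> real" where
  "Rf s d = sqrt (1/s + (1 - 2/s)/d)"
definition R1 :: "real \<Rightarrow> real \<Rightarrow> real" where
  "R1 s d = -(1 - 2/s) / (2 * d^2 * Rf s d)"
definition R2 :: "real \<Rightarrow> real \<Rightarrow> real" where
  "R2 s d = (1 - 2/s) / (d^3 * Rf s d) - (1 - 2/s)^2 / (4 * d^4 * (Rf s d)^3)"
definition Tf :: "real \<Rightarrow> real" where
  "Tf d = sqrt (2 * (d - 1)) / d"
definition T1 :: "real \<Rightarrow> real" where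
  "T1 d = (2 - d) / (sqrt (2 * (d - 1)) * d^2)"
definition T2 :: "real \<Rightarrow> real" where
  "T2 d = (3*d^2 - 12*d + 8) / ((sqrt (2 * (d - 1)))^3 * d^3)"

lemma Rf_pos: assumes "s > 2" "d > 0" shows "Rf s d > 0"
proof -
  have "1/s > 0" using assms by simp
  moreover have "(1 - 2/s)/d \<ge> 0" using assms by (simp add: field_simps)
  ultimately show ?thesis unfolding Rf_def by (simp add: add_pos_nonneg)
qed

lemma DERIV_Rf: assumes "s > 2" "d > 0" shows "DERIV (Rf s) d :> R1 s d"
proof -
  have g: "1/s + (1 - 2/s)/d > 0" using Rf_pos[OF assms] unfolding Rf_def by simp
  have i: "DERIV (\<lambda>d. 1/s + (1 - 2/s)/d) d :> -(1-2/s)/d^2"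
    using assms by (auto intro!: derivative_eq_intros simp: field_simps power2_eq_square)
  have "DERIV (\<lambda>d. sqrt (1/s + (1 - 2/s)/d)) d :> inverse (sqrt (1/s + (1 - 2/s)/d)) / 2 * (-(1-2/s)/d^2)"
    by (rule DERIV_chain2[OF DERIV_real_sqrt[OF g] i])
  then show ?thesis unfolding Rf_def[abs_def] R1_def
    by (rule DERIV_cong) (simp add: field_simps)
qed

lemma Rid: "r > 0 \<Longrightarrow> d > 0 \<Longrightarrow> (0 * (2*d^2*r) - (-b) * (2*(2*d*r + d^2 * (-b/(2*d^2*r))))) / ((2*d^2*r) * (2*d^2*r))
  = b / (d^3 * r) - b^2 / (4 * d^4 * r^3)"
  for r d b :: real
  by (simp add: field_simps power2_eq_square power3_eq_cube) (simp add: algebra_simps power2_eq_square power3_eq_cube power4_eq_xxxx)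

lemma Tid1: "w > 0 \<Longrightarrow> d > 0 \<Longrightarrow> w*w = 2*(d - 1) \<Longrightarrow>
  ((inverse w / 2 * 2) * d - w * 1) / (d * d) = (2 - d) / (w * d^2)"
  for w d :: real
proof -
  assume a: "w > 0" "d > 0" "w*w = 2*(d-1)"
  have "((inverse w / 2 * 2) * d - w * 1) / (d * d) = (d - w*w)/(w*d*d)"
    using a(1,2) by (simp add: field_simps)
  also have "d - w*w = 2 - d" using a(3) by simp
  finally show ?thesis by (simp add: power2_eq_square mult.assoc)
qed

lemma Tid2: "w > 0 \<Longrightarrow> d > 0 \<Longrightarrow> w*w = 2*(d - 1) \<Longrightarrow>
  ((0 - 1) * (w * d^2) - (2 - d) * (inverse w / 2 * 2 * d^2 + w * (2*d))) / ((w * d^2) * (w * d^2))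
   = (3*d^2 - 12*d + 8) / (w^3 * d^3)"
  for w d :: real
proof -
  assume a: "w > 0" "d > 0" "w*w = 2*(d-1)"
  have "((0 - 1) * (w * d^2) - (2 - d) * (inverse w / 2 * 2 * d^2 + w * (2*d))) / ((w * d^2) * (w * d^2))
     = (-((w*w)*d^2) - (2 - d) * (d^2 + 2*(w*w)*d)) / (w^3*d^4)"
    using a(1,2) apply (simp add: field_simps power2_eq_square power3_eq_cube)
    by (simp add: algebra_simps eval_nat_numeral)
  also have "-((w*w)*d^2) - (2 - d) * (d^2 + 2*(w*w)*d) = d * (3*d^2 - 12*d + 8)"
    unfolding a(3) by (simp add: algebra_simps power2_eq_square)
  also have "d * (3*d^2 - 12*d + 8) / (w^3*d^4) = (3*d^2 - 12*d + 8) / (w^3 * d^3)"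
    using a(1,2) by (simp add: field_simps eval_nat_numeral)
  finally show ?thesis .
qed

lemma DERIV_R1: assumes "s > 2" "d > 0" shows "DERIV (R1 s) d :> R2 s d"
proof -
  have R: "Rf s d > 0" using Rf_pos[OF assms] .
  have h: "DERIV (\<lambda>d. 2*d^2*Rf s d) d :> 2*(2*d*Rf s d + d^2 * R1 s d)"
    using assms by (auto intro!: derivative_eq_intros DERIV_Rf simp: field_simps power2_eq_square)
  have "DERIV (\<lambda>d. (-(1-2/s)) / (2*d^2*Rf s d)) d :>
     (0 * (2*d^2*Rf s d) - (-(1-2/s)) * (2*(2*d*Rf s d + d^2 * R1 s d))) / ((2*d^2*Rf s d) * (2*d^2*Rf s d))"
    by (rule DERIV_divide[OF DERIV_const h]) (use R assms in simp)
  then show ?thesis unfolding R1_def[abs_def]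
    apply (rule DERIV_cong)
    unfolding R2_def R1_def using Rid[OF R assms(2), of "1-2/s"] by simp
qed

lemma DERIV_Tf: assumes "d > 1" shows "DERIV Tf d :> T1 d"
proof -
  have w: "sqrt (2*(d-1)) > 0" using assms by simp
  have ws: "sqrt (2*(d-1)) * sqrt (2*(d-1)) = 2*(d-1)" using assms by simp
  have i: "DERIV (\<lambda>d. sqrt (2*(d-1))) d :> inverse (sqrt (2*(d-1))) / 2 * 2"
    by (rule DERIV_chain2[OF DERIV_real_sqrt]) (use assms in \<open>auto intro!: derivative_eq_intros\<close>)
  have "DERIV (\<lambda>d. sqrt (2*(d-1)) / d) d :> ((inverse (sqrt (2*(d-1))) / 2 * 2) * d - sqrt (2*(d-1)) * 1) / (d * d)"
    by (rule DERIV_divide[OF i DERIV_ident]) (use assms in simp)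
  then show ?thesis unfolding Tf_def[abs_def]
    apply (rule DERIV_cong)
    unfolding T1_def using Tid1[OF w _ ws] assms by simp
qed

lemma DERIV_T1: assumes "d > 1" shows "DERIV T1 d :> T2 d"
proof -
  have w: "sqrt (2*(d-1)) > 0" using assms by simp
  have ws: "sqrt (2*(d-1)) * sqrt (2*(d-1)) = 2*(d-1)" using assms by simp
  have i: "DERIV (\<lambda>d. sqrt (2*(d-1))) d :> inverse (sqrt (2*(d-1))) / 2 * 2"
    by (rule DERIV_chain2[OF DERIV_real_sqrt]) (use assms in \<open>auto intro!: derivative_eq_intros\<close>)
  have h0: "DERIV (\<lambda>d. sqrt (2*(d-1)) * d^2) d :> (inverse (sqrt (2*(d-1))) / 2 * 2) * d^2 + (real 2 * d^(2 - Suc 0)) * sqrt (2*(d-1))"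
    by (rule DERIV_mult[OF i DERIV_pow])
  have h: "DERIV (\<lambda>d. sqrt (2*(d-1)) * d^2) d :> inverse (sqrt (2*(d-1))) / 2 * 2 * d^2 + sqrt (2*(d-1)) * (2*d)"
    using h0 by (rule DERIV_cong) (simp add: algebra_simps)
  have "DERIV (\<lambda>d. (2 - d) / (sqrt (2*(d-1)) * d^2)) d :>
     ((0 - 1) * (sqrt (2*(d-1)) * d^2) - (2 - d) * (inverse (sqrt (2*(d-1))) / 2 * 2 * d^2 + sqrt (2*(d-1)) * (2*d))) / ((sqrt (2*(d-1)) * d^2) * (sqrt (2*(d-1)) * d^2))"
    by (rule DERIV_divide[OF DERIV_diff[OF DERIV_const DERIV_ident] h]) (use assms in simp)
  then show ?thesis unfolding T1_def[abs_def]
    apply (rule DERIV_cong)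
    unfolding T2_def using Tid2[OF w _ ws] assms by simp
qed

definition phi :: "real \<Rightarrow> real \<Rightarrow> real \<Rightarrow> real" where
  "phi K s d = 2*K*(d-K+1)*Rf s d + (d-K+1)*(d-K)*Tf d"
definition phi1 :: "real \<Rightarrow> real \<Rightarrow> real \<Rightarrow> real" where
  "phi1 K s d = 2*K*(Rf s d + (d-K+1)*R1 s d) + (2*(d-K+1)-1)*Tf d + (d-K+1)*(d-K)*T1 d"
definition phi2 :: "real \<Rightarrow> real \<Rightarrow> real \<Rightarrow> real" where
  "phi2 K s d = 2*K*(2*R1 s d + (d-K+1)*R2 s d) + 2*Tf d + 2*(2*(d-K+1)-1)*T1 d + (d-K+1)*(d-K)*T2 d"

lemma DERIV_phi: assumes "s > 2" "d > 1" shows "DERIV (phi K s) d :> phi1 K s d"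
  unfolding phi_def[abs_def] phi1_def using assms
  by (auto intro!: derivative_eq_intros DERIV_Rf DERIV_Tf simp: algebra_simps)

lemma DERIV_phi1: assumes "s > 2" "d > 1" shows "DERIV (phi1 K s) d :> phi2 K s d"
  unfolding phi1_def[abs_def] phi2_def using assms
  by (auto intro!: derivative_eq_intros DERIV_Rf DERIV_Tf DERIV_R1 DERIV_T1 simp: algebra_simps)

lemma qpart: "q \<ge> 0 \<Longrightarrow> 5*q - 2*q^2 - 3*q^3 + 4*q^4 \<ge> (0::real)"
proof -
  assume q: "q \<ge> 0"
  have "4*q^3 - 3*q^2 - 2*q + 5 > 0"
  proof (cases "q < 1")
    case True
    then have "(1-q)*(3*q+5) > 0" using q by simp
    moreover have "4*q^3 \<ge> 0" using q by simp
    moreover have "(1-q)*(3*q+5) = 5 - 2*q - 3*q^2" by (simp add: algebra_simps power2_eq_square)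
    ultimately show ?thesis by linarith
  next
    case False
    then have "q^2*(4*q-4) \<ge> 0" by simp
    moreover have "(q-1)^2 \<ge> 0" by simp
    moreover have "q^2*(4*q-4) = 4*q^3 - 4*q^2" by (simp add: algebra_simps power2_eq_square power3_eq_cube)
    moreover have "(q-1)^2 = q^2 - 2*q + 1" by (simp add: algebra_simps power2_eq_square)
    ultimately show ?thesis by linarith
  qed
  then have "q * (4*q^3 - 3*q^2 - 2*q + 5) \<ge> 0" using q by simp
  then show ?thesis by (simp add: algebra_simps power2_eq_square power3_eq_cube power4_eq_xxxx)
qed

lemma NP_bound:
  fixes p q c d K :: real
  assumes p: "p > 0" and q: "q \<ge> 0"
  and c_def: "c = 1 + p" and d_def: "d = 1 + p + q" and K_def: "K = 1 + q"
  shows "2*(8*(d-1)^2*d^2 + 4*(2*c-1)*(2-d)*(d-1)*d + c*(c-1)*(3*d^2-12*d+8))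
         > 3 * K*(4*(K-1)+c) * (d-1) * d"
proof -
  have e: "2*(8*(d-1)^2*d^2 + 4*(2*c-1)*(2-d)*(d-1)*d + c*(c-1)*(3*d^2-12*d+8))
         - 3 * K*(4*(K-1)+c) * (d-1) * d =
     (5*q - 2*q^2 - 3*q^3 + 4*q^4) + (3*p + 12*p*q + 30*p*q^2 + 21*p*q^3 + 12*p^2 + 48*p^2*q + 36*p^2*q^2 + 15*p^3 + 25*p^3*q + 6*p^4)"
    unfolding c_def d_def K_def by (simp add: algebra_simps power2_eq_square power3_eq_cube power4_eq_xxxx)
  have "3*p + 12*p*q + 30*p*q^2 + 21*p*q^3 + 12*p^2 + 48*p^2*q + 36*p^2*q^2 + 15*p^3 + 25*p^3*q + 6*p^4 > 0"
    using p q by (simp add: add_pos_nonneg)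
  with qpart[OF q] e show ?thesis by linarith
qed

lemma NP_bound':
  fixes c d K :: real
  assumes "c > 1" "K \<ge> 1" "d = c + K - 1"
  shows "2*(8*(d-1)^2*d^2 + 4*(2*c-1)*(2-d)*(d-1)*d + c*(c-1)*(3*d^2-12*d+8))
         > 3 * K*(4*(K-1)+c) * (d-1) * d"
proof -
  have e: "1 + (c-1) = c" "1 + (c-1) + (K-1) = d" "1 + (K-1) = K" using assms by simp_all
  show ?thesis by (rule NP_bound[of "c-1" "K-1"]) (use assms in simp_all)
qed

lemma Ppart_id:
  fixes w d c :: real
  assumes w: "w > 0" and d: "d > 0" and ww: "w*w = 2*(d-1)"
  shows "2*(w/d) + 2*(2*c-1)*((2-d)/(w*d^2)) + c*(c-1)*((3*d^2-12*d+8)/(w^3*d^3))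
     = (8*(d-1)^2*d^2 + 4*(2*c-1)*(2-d)*(d-1)*d + c*(c-1)*(3*d^2-12*d+8)) / (w^3*d^3)"
proof -
  have "2*(w/d) + 2*(2*c-1)*((2-d)/(w*d^2)) + c*(c-1)*((3*d^2-12*d+8)/(w^3*d^3))
     = (2*(w*w)*(w*w)*d^2 + 2*(2*c-1)*(2-d)*(w*w)*d + c*(c-1)*(3*d^2-12*d+8)) / (w^3*d^3)"
    using w d by (simp add: field_simps power2_eq_square power3_eq_cube)
  also have "\<dots> = (8*(d-1)^2*d^2 + 4*(2*c-1)*(2-d)*(d-1)*d + c*(c-1)*(3*d^2-12*d+8)) / (w^3*d^3)"
    unfolding ww by (simp add: algebra_simps power2_eq_square)
  finally show ?thesis .
qed

lemma Qpart_bound: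
  fixes R d b K c :: real
  assumes R: "R > 0" and d: "d > 0" and b: "b \<ge> 0" and K: "K \<ge> 1" and c: "c = d - K + 1" "c \<ge> 0"
    and dR: "d * R^2 \<ge> b"
  shows "2*K*(2*(-b/(2*d^2*R)) + c*(b/(d^3*R) - b^2/(4*d^4*R^3))) \<ge> -(K*(4*(K-1)+c)/2) * (b/R) / d^3"
proof -
  have e: "2*K*(2*(-b/(2*d^2*R)) + c*(b/(d^3*R) - b^2/(4*d^4*R^3))) = -(2*K*(b/R)/d^3) * ((K-1) + c*(b/(d*R^2))/4)"
    unfolding c(1) using R d by (simp add: field_simps power2_eq_square power3_eq_cube power4_eq_xxxx)
  have "b/(d*R^2) \<le> 1" using dR R d by (simp add: divide_le_eq)
  then have "c*(b/(d*R^2)) \<le> c*1" using c(2) by (rule mult_left_mono)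
  then have "c*(b/(d*R^2))/4 \<le> c/4" by simp
  moreover have "2*K*(b/R)/d^3 \<ge> 0" using K b R d by simp
  ultimately have "(2*K*(b/R)/d^3) * ((K-1) + c*(b/(d*R^2))/4) \<le> (2*K*(b/R)/d^3) * ((K-1) + c/4)"
    by (intro mult_left_mono) auto
  also have "\<dots> = (K*(4*(K-1)+c)/2) * (b/R) / d^3" using R d by (simp add: field_simps)
  finally show ?thesis unfolding e by simp
qed

lemma phi2_pos:
  assumes K: "K \<ge> 1" and dK: "d > K" and s: "s > 2"
  shows "phi2 K s d > 0"
proof -
  define c where "c = d - K + 1"
  define b where "b = 1 - 2/s"
  define R where "R = Rf s d"
  define w where "w = sqrt (2*(d-1))"
  define M where "M = K*(4*(K-1)+c)/2"
  define NP where "NP = 8*(d-1)^2*d^2 + 4*(2*c-1)*(2-d)*(d-1)*d + c*(c-1)*(3*d^2-12*d+8)"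
  have d1: "d > 1" using K dK by simp
  have d0: "d > 0" using d1 by simp
  have c1: "c > 1" using dK c_def by simp
  have b0: "b \<ge> 0" "b \<le> 1" using s unfolding b_def by (auto simp: field_simps)
  have R0: "R > 0" unfolding R_def using Rf_pos[OF s d0] .
  have R2: "R^2 = 1/s + b/d" unfolding R_def Rf_def b_def
    using Rf_pos[OF s d0] unfolding Rf_def by (simp add: real_sqrt_pow2_iff add_nonneg_nonneg less_imp_le)
  have dR: "d * R^2 \<ge> b" unfolding R2 using d0 s by (simp add: field_simps)
  have w0: "w > 0" unfolding w_def using d1 by simp
  have ww: "w*w = 2*(d-1)" unfolding w_def using d1 by simp
  have M0: "M > 0" unfolding M_def using K c1 by (simp add: add_pos_nonneg)
  have Q: "2*K*(2*R1 s d + (d-K+1)*R2 s d) \<ge> -M * (b/R) / d^3"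
    unfolding M_def R1_def R2_def b_def[symmetric] R_def[symmetric] c_def[symmetric]
    using Qpart_bound[OF R0 d0 b0(1) K c_def] c1 dR by simp
  have P: "2*Tf d + 2*(2*(d-K+1)-1)*T1 d + (d-K+1)*(d-K)*T2 d = NP / (w^3*d^3)"
  proof -
    have "(d-K+1)*(d-K) = c*(c-1)" unfolding c_def by simp
    then show ?thesis unfolding Tf_def T1_def T2_def w_def[symmetric] NP_def
      using Ppart_id[OF w0 d0 ww, of c] unfolding c_def by (simp add: algebra_simps)
  qed
  have phi2e: "phi2 K s d = 2*K*(2*R1 s d + (d-K+1)*R2 s d) + NP / (w^3*d^3)"
    unfolding phi2_def using P by simp
  have NPb: "2*NP > 3*(2*M)*(d-1)*d"
  proof -
    have "d = c + K - 1" unfolding c_def by simp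
    note F = NP_bound'[OF c1 K this]
    have "3*(2*M) = 3*K*(4*(K-1)+c)" unfolding M_def by simp
    then show ?thesis using F unfolding NP_def by simp
  qed
  define X where "X = b/R"
  have X0: "X \<ge> 0" unfolding X_def using b0 R0 by simp
  have X2: "X^2 \<le> d"
  proof -
    have "X^2 = b * (b / R^2)" unfolding X_def by (simp add: power2_eq_square)
    also have "b / R^2 \<le> d" using dR R0 d0 by (simp add: divide_le_eq mult.commute)
    then have "b * (b / R^2) \<le> 1 * d" using b0 by (intro mult_mono) auto
    finally show ?thesis by simp
  qed
  have w6: "(w^3)^2 = 8*(d-1)^3"
  proof -
    have "(w^3)^2 = (w*w)^3" by (simp add: power_mult_distrib power_mult[symmetric])
    also have "(w*w)^3 = (2*(d-1))^3" unfolding ww ..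
    also have "\<dots> = 8*(d-1)^3" by (simp add: power3_eq_cube algebra_simps)
    finally show ?thesis .
  qed
  have Y2: "(X*w^3)^2 \<le> 8*d^2*(d-1)^2"
  proof -
    have "(X*w^3)^2 = X^2 * (w^3)^2" by (simp only: power_mult_distrib)
    also have "\<dots> = X^2 * (8*(d-1)^3)" unfolding w6 ..
    also have "\<dots> \<le> d * (8*(d-1)^3)" using X2 d1 by (intro mult_right_mono) auto
    also have "\<dots> = 8*d*(d-1)*(d-1)^2" by (simp add: power2_eq_square power3_eq_cube)
    also have "\<dots> \<le> 8*d*d*(d-1)^2" using d1 by (intro mult_right_mono) auto
    finally show ?thesis by (simp add: power2_eq_square)
  qed
  have NP0: "NP > 0" using NPb M0 d1 by (smt (verit) mult_pos_pos)
  have key: "M*(X*w^3) < NP"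
  proof (rule power2_less_imp_less)
    have "(M*(X*w^3))^2 = M^2 * (X*w^3)^2" by (simp add: power_mult_distrib)
    also have "\<dots> \<le> M^2 * (8*d^2*(d-1)^2)" using Y2 by (intro mult_left_mono) auto
    also have "\<dots> < (3*M*(d-1)*d)^2" using M0 d1 by (simp add: power_mult_distrib)
    also have "\<dots> \<le> NP^2" using NPb M0 d1 by (intro power_mono) (auto simp: mult_nonneg_nonneg algebra_simps)
    finally show "(M*(X*w^3))^2 < NP^2" .
    show "0 \<le> NP" using NP0 by simp
  qed
  have "-M * (b/R) / d^3 + NP / (w^3*d^3) = (NP - M*(X*w^3)) / (w^3*d^3)"
    unfolding X_def using w0 d0 by (simp add: field_simps)
  also have "\<dots> > 0" using key w0 d0 by simp
  finally show ?thesis unfolding phi2e using Q by linarith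
qed

lemma phi_cont: assumes "K \<ge> 1" "s > 2" shows "continuous_on {K..x} (phi K s)"
  unfolding phi_def[abs_def] Rf_def Tf_def using assms
  by (intro continuous_intros) auto

lemma phi_mvt:
  assumes K: "K \<ge> 1" and s: "s > 2" and ab: "K \<le> u" "u < v"
  shows "\<exists>z. u < z \<and> z < v \<and> phi K s v - phi K s u = (v - u) * phi1 K s z"
proof -
  have c: "continuous_on {u..v} (phi K s)"
    by (rule continuous_on_subset[OF phi_cont[OF K s, of v]]) (use ab in auto)
  have "\<And>x. u < x \<Longrightarrow> x < v \<Longrightarrow> phi K s differentiable (at x)"
    using DERIV_phi[OF s] ab K unfolding real_differentiable_def by force
  from MVT[OF ab(2) c this] obtain l z where z: "u < z" "z < v" "DERIV (phi K s) z :> l"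
    "phi K s v - phi K s u = (v - u) * l" by blast
  have "l = phi1 K s z" using DERIV_unique[OF z(3) DERIV_phi[OF s]] z ab K by simp
  then show ?thesis using z by blast
qed

lemma phi1_mono:
  assumes K: "K \<ge> 1" and s: "s > 2" and "K < x" "x < y"
  shows "phi1 K s x < phi1 K s y"
  using assms(4)
proof (rule DERIV_pos_imp_increasing)
  fix z assume "x \<le> z" "z \<le> y"
  then have "z > K" using assms by simp
  then show "\<exists>y. DERIV (phi1 K s) z :> y \<and> y > 0"
    using DERIV_phi1[OF s] phi2_pos[OF K _ s] K by (intro exI[of _ "phi2 K s z"]) auto
qed

lemma phi_ineq:
  assumes K: "K \<ge> 1" and s: "s > 2" and ab: "2 \<le> a" "a \<le> b"
  shows "phi K s (K+a-1) + phi K s (K+b-1) < phi K s K + phi K s (K+a+b-2)"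
proof -
  obtain z1 where z1: "K < z1" "z1 < K+a-1" "phi K s (K+a-1) - phi K s K = ((K+a-1) - K) * phi1 K s z1"
    using phi_mvt[OF K s, of K "K+a-1"] ab by auto
  obtain z2 where z2: "K+b-1 < z2" "z2 < K+a+b-2" "phi K s (K+a+b-2) - phi K s (K+b-1) = ((K+a+b-2) - (K+b-1)) * phi1 K s z2"
    using phi_mvt[OF K s, of "K+b-1" "K+a+b-2"] ab by auto
  have "phi1 K s z1 < phi1 K s z2" using phi1_mono[OF K s z1(1)] z1 z2 ab by simp
  then have "(a-1) * phi1 K s z1 < (a-1) * phi1 K s z2" using ab by simp
  then show ?thesis using z1(3) z2(3) by (simp add: algebra_simps)
qed

definition tt :: "real \<Rightarrow> real \<Rightarrow> real" where
  "tt x y = sqrt ((x + y - 2) / (x * y))"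

lemma tt_sym: "tt x y = tt y x" unfolding tt_def by (simp add: add.commute mult.commute)

lemma sqrt_shift:
  fixes a b p r :: real
  assumes ab: "b \<le> a" "0 \<le> b" and p: "p \<ge> 0" and r: "r \<le> 1"
    and A: "p + r*a^2 \<ge> 0" and B: "p + r*b^2 \<ge> 0"
  shows "sqrt (p + r*a^2) \<le> sqrt (p + r*b^2) + (a - b)"
proof (cases "r \<le> 0")
  case True
  have "b^2 \<le> a^2" using ab by (simp add: power_mono)
  then have "r*a^2 \<le> r*b^2" using True by (simp add: mult_left_mono_neg)
  then have "sqrt (p + r*a^2) \<le> sqrt (p + r*b^2)" by (intro real_sqrt_le_mono) simp
  then show ?thesis using ab by linarith
next
  case False
  define sB where "sB = sqrt (p + r*b^2)"
  have "(r*b)^2 \<le> p + r*b^2"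
  proof -
    have "r*r \<le> r" using False r by (simp add: mult_left_le)
    then have "r*r*b^2 \<le> r*b^2" by (simp add: mult_right_mono)
    moreover have "(r*b)^2 = r*r*b^2" by (simp add: power2_eq_square)
    ultimately show ?thesis using p by linarith
  qed
  then have sB1: "r*b \<le> sB" unfolding sB_def by (rule real_le_rsqrt)
  have sB0: "sB \<ge> 0" unfolding sB_def using B by simp
  have sB2: "sB^2 = p + r*b^2" unfolding sB_def using B by simp
  have "p + r*a^2 = sB^2 + 2*(r*b)*(a-b) + r*(a-b)^2"
    unfolding sB2 by (simp add: algebra_simps power2_eq_square)
  also have "\<dots> \<le> sB^2 + 2*sB*(a-b) + (a-b)^2"
  proof -
    have "2*(r*b)*(a-b) \<le> 2*sB*(a-b)" using sB1 ab by (intro mult_right_mono) auto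
    moreover have "r*(a-b)^2 \<le> 1*(a-b)^2" using r by (intro mult_right_mono) auto
    ultimately show ?thesis by simp
  qed
  also have "\<dots> = (sB + (a-b))^2" by (simp add: algebra_simps power2_eq_square)
  finally have h: "p + r*a^2 \<le> (sB + (a-b))^2" .
  have "sqrt (p + r*a^2) \<le> sqrt ((sB + (a-b))^2)" by (rule real_sqrt_le_mono[OF h])
  also have "\<dots> = sB + (a - b)" using sB0 ab by simp
  finally show ?thesis unfolding sB_def .
qed

definition lam :: "real \<Rightarrow> real" where
  "lam x = 1 / sqrt x - 1 / sqrt (x + 1)"

lemma loss:
  fixes x y :: real
  assumes x: "x \<ge> 1" and y: "y \<ge> 1"
  shows "tt (x+1) y \<ge> tt x y - lam x"
proof -
  define a where "a = 1 / sqrt x"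
  define b where "b = 1 / sqrt (x+1)"
  define p where "p = 1 / y"
  define r where "r = 1 - 2*p"
  have a2: "a^2 = 1/x" unfolding a_def using x by (simp add: power_divide)
  have b2: "b^2 = 1/(x+1)" unfolding b_def using x by (simp add: power_divide)
  have ba: "b \<le> a" unfolding a_def b_def using x by (simp add: frac_le)
  have b0: "b \<ge> 0" unfolding b_def using x by simp
  have p0: "p \<ge> 0" unfolding p_def using y by simp
  have r1: "r \<le> 1" unfolding r_def using p0 by simp
  have e1: "(x + y - 2) / (x * y) = p + r*a^2" unfolding a2 r_def p_def using x y
    by (simp add: field_simps)
  have xy: "x + 1 > 0" "y > 0" using x y by auto
  have e2: "(x + 1 + y - 2) / ((x+1) * y) = p + r*b^2"
  proof -
    have "p + r*b^2 = 1/y + ((y-2)/y)/(x+1)" unfolding b2 r_def p_def using xy by (simp add: diff_divide_distrib)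
    also have "\<dots> = (x+1)/((x+1)*y) + (y-2)/((x+1)*y)"
    proof -
      have "(x+1)/((x+1)*y) = 1/y" using xy by simp
      moreover have "((y-2)/y)/(x+1) = (y-2)/((x+1)*y)" by (simp add: mult.commute)
      ultimately show ?thesis by simp
    qed
    also have "\<dots> = (x + 1 + y - 2) / ((x+1) * y)" by (simp add: add_divide_distrib[symmetric] algebra_simps)
    finally show ?thesis by simp
  qed
  have A: "p + r*a^2 \<ge> 0" unfolding e1[symmetric] using x y by simp
  have B: "p + r*b^2 \<ge> 0" unfolding e2[symmetric] using x y by simp
  have "sqrt (p + r*a^2) \<le> sqrt (p + r*b^2) + (a - b)"
    by (rule sqrt_shift[OF ba b0 p0 r1 A B])
  then show ?thesis unfolding tt_def lam_def e1 e2 a_def b_def by simp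
qed

lemma gain:
  fixes x z :: real
  assumes x: "x \<ge> 1" and z: "z \<ge> 1"
  shows "tt (x+1) (z+1) > x * lam x + z * lam z"
proof -
  have half: "w * lam w < 1 / (2 * sqrt (w + 1))" if w: "w \<ge> 1" for w :: real
  proof -
    have s1: "sqrt w > 0" "sqrt (w+1) > 0" using w by auto
    have "sqrt w * sqrt (w+1) = sqrt (w*(w+1))" by (simp add: real_sqrt_mult)
    also have "\<dots> < sqrt ((w + 1/2)^2)"
      by (subst real_sqrt_less_iff) (simp add: algebra_simps power2_eq_square)
    also have "\<dots> = w + 1/2" using w by simp
    finally have lt: "sqrt w * sqrt (w+1) - w < 1/2" by simp
    have "w * lam w = (sqrt w * sqrt (w+1) - w) / sqrt (w+1)"
      unfolding lam_def using s1 w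
      by (simp add: field_simps)
    also have "\<dots> < (1/2) / sqrt (w+1)" using lt s1(2) by (intro divide_strict_right_mono) auto
    finally show ?thesis by simp
  qed
  define P where "P = 1 / sqrt (x+1)"
  define Q where "Q = 1 / sqrt (z+1)"
  have P0: "P \<ge> 0" and Q0: "Q \<ge> 0" unfolding P_def Q_def using x z by auto
  have P2: "P^2 = 1/(x+1)" unfolding P_def using x by (simp add: power_divide)
  have Q2: "Q^2 = 1/(z+1)" unfolding Q_def using z by (simp add: power_divide)
  have P2h: "P^2 \<le> 1/2" unfolding P2 using x by (simp add: field_simps)
  have Q2h: "Q^2 \<le> 1/2" unfolding Q2 using z by (simp add: field_simps)
  have e: "((x+1) + (z+1) - 2) / ((x+1) * (z+1)) = P^2 + Q^2 - 2*P^2*Q^2"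
  proof -
    have x1: "x + 1 > 0" and z1: "z + 1 > 0" using x z by auto
    define D where "D = (x+1)*(z+1)"
    have "1/(x+1) = (z+1)/D" unfolding D_def using z1 by simp
    moreover have "1/(z+1) = (x+1)/D" unfolding D_def using x1 by simp
    moreover have "2*(1/(x+1))*(1/(z+1)) = 2/D" unfolding D_def by simp
    ultimately have "1/(x+1) + 1/(z+1) - 2*(1/(x+1))*(1/(z+1)) = ((z+1) + (x+1) - 2) / D"
      by (simp add: add_divide_distrib diff_divide_distrib)
    then have "1/(x+1) + 1/(z+1) - 2*(1/(x+1))*(1/(z+1)) = ((z+1) + (x+1) - 2) / ((x+1)*(z+1))"
      unfolding D_def .
    then show ?thesis unfolding P2 Q2 by (simp add: algebra_simps)
  qed
  have PQ: "P*Q \<le> 1/2"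
  proof -
    have "2*(P*Q) \<le> P^2 + Q^2" using sum_squares_bound[of P Q] by (simp add: power2_eq_square)
    then show ?thesis using P2h Q2h by simp
  qed
  have "((P+Q)/2)^2 \<le> P^2 + Q^2 - 2*P^2*Q^2"
  proof -
    have "0 \<le> 3*(P-Q)^2" by simp
    moreover have "0 \<le> 4*(P*Q)*(1 - 2*(P*Q))" using PQ P0 Q0 by simp
    ultimately have "0 \<le> 3*(P-Q)^2 + 4*(P*Q)*(1 - 2*(P*Q))" by simp
    moreover have "4*(P^2 + Q^2 - 2*P^2*Q^2) - 4*((P+Q)/2)^2 = 3*(P-Q)^2 + 4*(P*Q)*(1 - 2*(P*Q))"
      by (simp add: algebra_simps power2_eq_square)
    ultimately have "0 \<le> 4*(P^2 + Q^2 - 2*P^2*Q^2) - 4*((P+Q)/2)^2" by simp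
    then show ?thesis by simp
  qed
  then have "(P+Q)/2 \<le> tt (x+1) (z+1)" unfolding tt_def e using P0 Q0 real_le_rsqrt by blast
  moreover have "x * lam x < P/2" using half[OF x] unfolding P_def by simp
  moreover have "z * lam z < Q/2" using half[OF z] unfolding Q_def by simp
  ultimately show ?thesis by simp
qed

abbreviation N :: "'a set \<Rightarrow> ('a \<Rightarrow> 'a \<Rightarrow> bool) \<Rightarrow> 'a \<Rightarrow> 'a set" where
  "N V E x \<equiv> {y \<in> V. E x y}"

definition ABC2 :: "'a set \<Rightarrow> ('a \<Rightarrow> 'a \<Rightarrow> bool) \<Rightarrow> real" where
  "ABC2 V E = (\<Sum>x\<in>V. \<Sum>y\<in>N V E x. tt (real (degree V E x)) (real (degree V E y)))"

lemma ABC_eq: "finite V \<Longrightarrow> ABC V E = ABC2 V E / 2"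
proof -
  assume f: "finite V"
  have e: "{(u, v). u \<in> V \<and> v \<in> V \<and> E u v} = Sigma V (\<lambda>u. N V E u)" by auto
  show ?thesis unfolding ABC_def ABC2_def e tt_def
    by (subst sum.Sigma) (use f in auto)
qed

lemma sg_finite: "simple_graph V E \<Longrightarrow> finite V" unfolding simple_graph_def by simp
lemma sg_sym: "simple_graph V E \<Longrightarrow> E x y \<Longrightarrow> E y x" unfolding simple_graph_def by blast
lemma sg_irrefl: "simple_graph V E \<Longrightarrow> \<not> E x x" unfolding simple_graph_def by blast
lemma sg_in: "simple_graph V E \<Longrightarrow> E x y \<Longrightarrow> x \<in> V \<and> y \<in> V" unfolding simple_graph_def by blast

lemma degree_sym: "simple_graph V E \<Longrightarrow> {x \<in> V. E x u} = N V E u"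
  by (auto dest: sg_sym)

lemma degree_pos: assumes "simple_graph V E" "E x y" shows "degree V E y \<ge> 1"
proof -
  have "x \<in> N V E y" using assms sg_sym[OF assms] sg_in[OF assms] by simp
  moreover have "finite (N V E y)" using sg_finite[OF assms(1)] by simp
  ultimately have "card (N V E y) > 0" using card_gt_0_iff by blast
  then show ?thesis unfolding degree_def by simp
qed

definition addE :: "('a \<Rightarrow> 'a \<Rightarrow> bool) \<Rightarrow> 'a \<Rightarrow> 'a \<Rightarrow> 'a \<Rightarrow> 'a \<Rightarrow> bool" where
  "addE E u v x y \<longleftrightarrow> E x y \<or> (x = u \<and> y = v) \<or> (x = v \<and> y = u)"

lemma addE_sg: "simple_graph V E \<Longrightarrow> u \<in> V \<Longrightarrow> v \<in> V \<Longrightarrow> u \<noteq> v \<Longrightarrow> simple_graph V (addE E u v)"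
  unfolding simple_graph_def addE_def by blast

lemma sum_lam_ind:
  assumes sg: "simple_graph V E" and u: "u \<in> V"
  shows "(\<Sum>x\<in>V. \<Sum>y\<in>N V E x. (if x = u then c else 0) + (if y = u then c else 0)) = 2 * real (degree V E u) * c"
proof -
  have f: "finite V" using sg_finite[OF sg] .
  have "(\<Sum>x\<in>V. \<Sum>y\<in>N V E x. (if x = u then c else (0::real))) = (\<Sum>x\<in>V. if x = u then real (card (N V E x)) * c else 0)"
    by (intro sum.cong) auto
  also have "\<dots> = real (degree V E u) * c" using u f unfolding degree_def by (simp add: sum.delta)
  finally have 1: "(\<Sum>x\<in>V. \<Sum>y\<in>N V E x. (if x = u then c else (0::real))) = real (degree V E u) * c" .
  have "(\<Sum>x\<in>V. \<Sum>y\<in>N V E x. (if y = u then c else (0::real))) = (\<Sum>x\<in>V. if E x u then c else 0)"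
  proof (intro sum.cong refl)
    fix x assume "x \<in> V"
    have "(\<Sum>y\<in>N V E x. (if y = u then c else (0::real))) = (if u \<in> N V E x then c else 0)"
      using f by (simp add: sum.delta)
    then show "(\<Sum>y\<in>N V E x. (if y = u then c else (0::real))) = (if E x u then c else 0)" using u by simp
  qed
  also have "\<dots> = (\<Sum>x\<in>{x \<in> V. E x u}. c)" by (rule sum.inter_filter[symmetric]) (use f in simp)
  also have "\<dots> = real (degree V E u) * c" unfolding degree_sym[OF sg] degree_def by simp
  finally have 2: "(\<Sum>x\<in>V. \<Sum>y\<in>N V E x. (if y = u then c else (0::real))) = real (degree V E u) * c" .
  show ?thesis using 1 2 by (simp add: sum.distrib)
qed

lemma add_edge_increases:
  assumes sg: "simple_graph V E" and u: "u \<in> V" and v: "v \<in> V" and uv: "u \<noteq> v" and ne: "\<not> E u v"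
    and du: "degree V E u \<ge> 1" and dv: "degree V E v \<ge> 1"
  shows "ABC2 V E < ABC2 V (addE E u v)"
proof -
  let ?E' = "addE E u v"
  let ?D = "degree V E" and ?D' = "degree V ?E'"
  have f: "finite V" using sg_finite[OF sg] .
  have nvu: "\<not> E v u" using ne sg_sym[OF sg] by blast
  have Nu: "N V ?E' u = insert v (N V E u)" using uv v unfolding addE_def by auto
  have Nv: "N V ?E' v = insert u (N V E v)" using uv u unfolding addE_def by auto
  have Nx: "x \<noteq> u \<Longrightarrow> x \<noteq> v \<Longrightarrow> N V ?E' x = N V E x" for x unfolding addE_def by auto
  have vNu: "v \<notin> N V E u" using ne by simp
  have uNv: "u \<notin> N V E v" using nvu by simp
  have Du: "?D' u = ?D u + 1" unfolding degree_def Nu using vNu f by simp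
  have Dv: "?D' v = ?D v + 1" unfolding degree_def Nv using uNv f by simp
  have Dx: "x \<noteq> u \<Longrightarrow> x \<noteq> v \<Longrightarrow> ?D' x = ?D x" for x unfolding degree_def using Nx by simp
  define f' where "f' x y = tt (real (?D' x)) (real (?D' y))" for x y
  define f0 where "f0 x y = tt (real (?D x)) (real (?D y))" for x y
  define lu where "lu = lam (real (?D u))"
  define lv where "lv = lam (real (?D v))"
  define ind where "ind x y = ((if x = u then lu else 0) + (if y = u then lu else 0)) + ((if x = v then lv else 0) + (if y = v then lv else 0))" for x y
  have split: "(\<Sum>y\<in>N V ?E' x. f' x y) = (\<Sum>y\<in>N V E x. f' x y) + (if x = u then f' u v else 0) + (if x = v then f' v u else 0)" for x
  proof -
    consider "x = u" | "x = v" | "x \<noteq> u" "x \<noteq> v" by blast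
    then show ?thesis
    proof cases
      case 1 then show ?thesis using Nu vNu f uv by (simp add: add.commute)
    next
      case 2 then show ?thesis using Nv uNv f uv by (simp add: add.commute)
    next
      case 3 then show ?thesis using Nx by simp
    qed
  qed
  have new: "ABC2 V ?E' = (\<Sum>x\<in>V. \<Sum>y\<in>N V E x. f' x y) + f' u v + f' v u"
  proof -
    have "ABC2 V ?E' = (\<Sum>x\<in>V. (\<Sum>y\<in>N V E x. f' x y) + (if x = u then f' u v else 0) + (if x = v then f' v u else 0))"
      unfolding ABC2_def f'_def[symmetric] using split by simp
    also have "\<dots> = (\<Sum>x\<in>V. \<Sum>y\<in>N V E x. f' x y) + f' u v + f' v u"
      using u v f by (simp add: sum.distrib sum.delta)
    finally show ?thesis .
  qed
  have pw: "f' x y \<ge> f0 x y - ind x y" if x: "x \<in> V" and y: "y \<in> N V E x" for x y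
  proof -
    have Exy: "E x y" using y by simp
    have dx1: "?D x \<ge> 1" using degree_pos[OF sg sg_sym[OF sg Exy]] .
    have dy1: "?D y \<ge> 1" using degree_pos[OF sg Exy] .
    have xy: "x \<noteq> y" using Exy sg_irrefl[OF sg] by blast
    consider "x = u" | "x = v" | "y = u" | "y = v" | "x \<noteq> u" "x \<noteq> v" "y \<noteq> u" "y \<noteq> v" by blast
    then show ?thesis
    proof cases
      case 1
      then have yu: "y \<noteq> u" "y \<noteq> v" using xy Exy ne by auto
      have "f' x y = tt (real (?D u) + 1) (real (?D y))" unfolding f'_def using 1 Du Dx[OF yu] by (simp add: add.commute)
      also have "\<dots> \<ge> tt (real (?D u)) (real (?D y)) - lu" unfolding lu_def
        by (rule loss) (use du dy1 in auto)
      finally show ?thesis unfolding f0_def ind_def using 1 yu uv by simp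
    next
      case 2
      then have yu: "y \<noteq> u" "y \<noteq> v" using xy Exy nvu by auto
      have "f' x y = tt (real (?D v) + 1) (real (?D y))" unfolding f'_def using 2 Dv Dx[OF yu] by (simp add: add.commute)
      also have "\<dots> \<ge> tt (real (?D v)) (real (?D y)) - lv" unfolding lv_def
        by (rule loss) (use dv dy1 in auto)
      finally show ?thesis unfolding f0_def ind_def using 2 yu uv by simp
    next
      case 3
      then have xu: "x \<noteq> u" "x \<noteq> v" using xy Exy nvu by auto
      have "f' x y = tt (real (?D u) + 1) (real (?D x))" unfolding f'_def using 3 Du Dx[OF xu] tt_sym by (simp add: add.commute)
      also have "\<dots> \<ge> tt (real (?D u)) (real (?D x)) - lu" unfolding lu_def
        by (rule loss) (use du dx1 in auto)
      finally show ?thesis unfolding f0_def ind_def using 3 xu uv tt_sym by simp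
    next
      case 4
      then have xu: "x \<noteq> u" "x \<noteq> v" using xy Exy ne by auto
      have "f' x y = tt (real (?D v) + 1) (real (?D x))" unfolding f'_def using 4 Dv Dx[OF xu] tt_sym by (simp add: add.commute)
      also have "\<dots> \<ge> tt (real (?D v)) (real (?D x)) - lv" unfolding lv_def
        by (rule loss) (use dv dx1 in auto)
      finally show ?thesis unfolding f0_def ind_def using 4 xu uv tt_sym by simp
    next
      case 5
      then show ?thesis unfolding f'_def f0_def ind_def using Dx by simp
    qed
  qed
  have "(\<Sum>x\<in>V. \<Sum>y\<in>N V E x. f0 x y - ind x y) \<le> (\<Sum>x\<in>V. \<Sum>y\<in>N V E x. f' x y)"
    using pw by (intro sum_mono) auto
  moreover have "(\<Sum>x\<in>V. \<Sum>y\<in>N V E x. f0 x y - ind x y) = ABC2 V E - (2 * real (?D u) * lu + 2 * real (?D v) * lv)"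
  proof -
    have "(\<Sum>x\<in>V. \<Sum>y\<in>N V E x. ind x y) = 2 * real (?D u) * lu + 2 * real (?D v) * lv"
      unfolding ind_def using sum_lam_ind[OF sg u, of lu] sum_lam_ind[OF sg v, of lv]
      by (simp add: sum.distrib)
    then show ?thesis unfolding ABC2_def f0_def[symmetric] by (simp add: sum_subtractf)
  qed
  moreover have "f' u v = tt (real (?D u) + 1) (real (?D v) + 1)" unfolding f'_def Du Dv by (simp add: add.commute)
  moreover have "f' v u = tt (real (?D u) + 1) (real (?D v) + 1)" unfolding f'_def Du Dv using tt_sym by (simp add: add.commute)
  moreover have "tt (real (?D u) + 1) (real (?D v) + 1) > real (?D u) * lu + real (?D v) * lv"
    unfolding lu_def lv_def by (rule gain) (use du dv in auto)
  ultimately show ?thesis unfolding new by linarith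
qed

lemma degree_mono: assumes "finite V" "\<And>y. E x y \<Longrightarrow> F x y" shows "degree V E x \<le> degree V F x"
  unfolding degree_def using assms by (intro card_mono) auto

lemma ABC2_mono_aux:
  assumes "card {p \<in> V \<times> V. F (fst p) (snd p) \<and> \<not> E (fst p) (snd p)} = m"
    and sgE: "simple_graph V E" and sgF: "simple_graph V F" and le: "\<And>x y. E x y \<Longrightarrow> F x y"
    and deg: "\<And>x. x \<in> V \<Longrightarrow> degree V E x \<ge> 1"
  shows "ABC2 V E \<le> ABC2 V F \<and> (E \<noteq> F \<longrightarrow> ABC2 V E < ABC2 V F)"
  using assms
proof (induction m arbitrary: E rule: less_induct)
  case (less m E)
  have f: "finite V" using sg_finite[OF less.prems(2)] .
  let ?M = "\<lambda>E. {p \<in> V \<times> V. F (fst p) (snd p) \<and> \<not> E (fst p) (snd p)}"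
  show ?case
  proof (cases "?M E = {}")
    case True
    have "E = F"
    proof (intro ext iffI)
      fix x y assume "F x y"
      then have "x \<in> V" "y \<in> V" using sg_in[OF sgF] by auto
      with True \<open>F x y\<close> show "E x y" by auto
    qed (use less.prems(4) in auto)
    then show ?thesis by simp
  next
    case False
    then obtain u v where uv: "u \<in> V" "v \<in> V" "F u v" "\<not> E u v" by auto
    have uneq: "u \<noteq> v" using uv(3) sg_irrefl[OF sgF] by blast
    let ?E' = "addE E u v"
    have sg': "simple_graph V ?E'" using addE_sg[OF less.prems(2) uv(1,2) uneq] .
    have le': "\<And>x y. ?E' x y \<Longrightarrow> F x y" using less.prems(4) uv(3) sg_sym[OF sgF] unfolding addE_def by blast
    have deg': "\<And>x. x \<in> V \<Longrightarrow> degree V ?E' x \<ge> 1"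
    proof -
      fix x assume "x \<in> V"
      have "degree V E x \<le> degree V ?E' x" by (rule degree_mono[OF f]) (simp add: addE_def)
      then show "degree V ?E' x \<ge> 1" using less.prems(5)[OF \<open>x \<in> V\<close>] by simp
    qed
    have sub: "?M ?E' \<subset> ?M E"
    proof
      show "?M ?E' \<subseteq> ?M E" unfolding addE_def by auto
      have "(u, v) \<in> ?M E" using uv by simp
      moreover have "(u, v) \<notin> ?M ?E'" unfolding addE_def by simp
      ultimately show "?M ?E' \<noteq> ?M E" by blast
    qed
    have fin: "finite (?M E)" using f by simp
    have lt: "card (?M ?E') < m" using psubset_card_mono[OF fin sub] less.prems(1) by simp
    have IH: "ABC2 V ?E' \<le> ABC2 V F"
      using less.IH[OF lt refl sg' sgF le' deg'] by blast
    have "ABC2 V E < ABC2 V ?E'"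
      by (rule add_edge_increases[OF less.prems(2) uv(1,2) uneq uv(4)]) (use less.prems(5) uv in auto)
    with IH show ?thesis by simp
  qed
qed

lemma ABC2_mono:
  assumes sgE: "simple_graph V E" and sgF: "simple_graph V F" and le: "\<And>x y. E x y \<Longrightarrow> F x y"
    and deg: "\<And>x. x \<in> V \<Longrightarrow> degree V E x \<ge> 1" and ne: "E \<noteq> F"
  shows "ABC2 V E < ABC2 V F"
  using ABC2_mono_aux[OF refl sgE sgF le deg] ne by blast

definition Hg :: "'a set \<Rightarrow> 'a set \<Rightarrow> 'a set \<Rightarrow> 'a \<Rightarrow> 'a \<Rightarrow> bool" where
  "Hg V A B x y \<longleftrightarrow> x \<in> V \<and> y \<in> V \<and> x \<noteq> y \<and> \<not> (x \<in> A \<and> y \<in> B) \<and> \<not> (x \<in> B \<and> y \<in> A)"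

lemma Hg_swap: "Hg V A B = Hg V B A" unfolding Hg_def by (intro ext) auto

lemma Hg_sg: "finite V \<Longrightarrow> simple_graph V (Hg V A B)"
  unfolding simple_graph_def Hg_def by auto

lemma sum_const_on: "(\<And>y. y \<in> Y \<Longrightarrow> f y = c) \<Longrightarrow> (\<Sum>y\<in>Y. f y) = real (card Y) * c"
  for f :: "'b \<Rightarrow> real" by simp

lemma Rf_tt: "s > 0 \<Longrightarrow> d > 0 \<Longrightarrow> Rf s d = tt s d"
  unfolding Rf_def tt_def by (simp add: field_simps)

lemma Tf_tt: "d > 0 \<Longrightarrow> Tf d = tt d d"
proof -
  assume d: "d > 0"
  have "(d + d - 2) / (d * d) = (2 * (d - 1)) / (d * d)" by simp
  then have "tt d d = sqrt (2 * (d - 1)) / sqrt (d * d)" unfolding tt_def by (simp add: real_sqrt_divide)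
  also have "sqrt (d * d) = d" using d by simp
  finally show ?thesis unfolding Tf_def by simp
qed

definition Fk :: "nat \<Rightarrow> nat \<Rightarrow> nat \<Rightarrow> real" where
  "Fk k a b = real k * (real k - 1) * tt (real k + real a + real b - 1) (real k + real a + real b - 1)
     + phi (real k) (real k + real a + real b - 1) (real k + real a - 1)
     + phi (real k) (real k + real a + real b - 1) (real k + real b - 1)"

lemma Fk_ineq:
  assumes k: "k \<ge> 1" and a: "a \<ge> 1" and b: "b \<ge> 1"
  shows "Fk k a b \<le> Fk k 1 (a + b - 1)" and "a \<ge> 2 \<Longrightarrow> b \<ge> 2 \<Longrightarrow> Fk k a b < Fk k 1 (a + b - 1)"
proof -
  have rab: "real (a + b - 1) = real a + real b - 1" using a by (simp add: of_nat_diff)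
  define s where "s = real k + real a + real b - 1"
  have F1: "Fk k 1 (a + b - 1) = real k * (real k - 1) * tt s s + phi (real k) s (real k) + phi (real k) s (real k + real a + real b - 2)"
    unfolding Fk_def rab s_def by (simp add: algebra_simps)
  have Fab: "Fk k a b = real k * (real k - 1) * tt s s + phi (real k) s (real k + real a - 1) + phi (real k) s (real k + real b - 1)"
    unfolding Fk_def s_def by simp
  have strict: "Fk k a b < Fk k 1 (a + b - 1)" if a2: "a \<ge> 2" and b2: "b \<ge> 2"
  proof -
    have s2: "s > 2" unfolding s_def using k a2 b2 by simp
    have K: "real k \<ge> 1" using k by simp
    have "phi (real k) s (real k + real a - 1) + phi (real k) s (real k + real b - 1)
        < phi (real k) s (real k) + phi (real k) s (real k + real a + real b - 2)"
    proof (cases "a \<le> b")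
      case True
      then show ?thesis using phi_ineq[OF K s2, of "real a" "real b"] a2 by simp
    next
      case False
      then show ?thesis using phi_ineq[OF K s2, of "real b" "real a"] b2 by (simp add: algebra_simps)
    qed
    then show ?thesis unfolding F1 Fab by simp
  qed
  then show "a \<ge> 2 \<Longrightarrow> b \<ge> 2 \<Longrightarrow> Fk k a b < Fk k 1 (a + b - 1)" by blast
  show "Fk k a b \<le> Fk k 1 (a + b - 1)"
  proof (cases "a = 1 \<or> b = 1")
    case True
    then show ?thesis
    proof
      assume "a = 1" then show ?thesis by simp
    next
      assume b1: "b = 1"
      then show ?thesis unfolding Fk_def using a by (simp add: algebra_simps)
    qed
  next
    case False
    then show ?thesis using strict a b by fastforce
  qed
qed

locale Hsetup =
  fixes V A B :: "'a set"
  assumes fin: "finite V" and AV: "A \<subseteq> V" and BV: "B \<subseteq> V" and AB: "A \<inter> B = {}"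
begin

abbreviation "S \<equiv> V - A - B"
abbreviation "k \<equiv> card S"
abbreviation "a \<equiv> card A"
abbreviation "b \<equiv> card B"

lemma finS: "finite S" and finA: "finite A" and finB: "finite B"
  using fin AV BV finite_subset by auto

lemma cardV: "card V = k + a + b"
proof -
  have e: "V = S \<union> A \<union> B" using AV BV by auto
  have "card (S \<union> A \<union> B) = card (S \<union> A) + b" by (rule card_Un_disjoint) (use finS finA finB AB in auto)
  also have "card (S \<union> A) = k + a" by (rule card_Un_disjoint) (use finS finA in auto)
  finally show ?thesis using e by simp
qed

lemma N_S: "x \<in> S \<Longrightarrow> N V (Hg V A B) x = V - {x}" unfolding Hg_def by auto
lemma N_A: "x \<in> A \<Longrightarrow> N V (Hg V A B) x = V - B - {x}" unfolding Hg_def using AV AB by auto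
lemma N_B: "x \<in> B \<Longrightarrow> N V (Hg V A B) x = V - A - {x}" unfolding Hg_def using BV AB by auto

lemma deg_S: "x \<in> S \<Longrightarrow> real (degree V (Hg V A B) x) = real k + real a + real b - 1"
proof -
  assume x: "x \<in> S"
  have xV: "x \<in> V" using x by simp
  have "card (V - {x}) = card V - 1" using xV fin by simp
  moreover have "card V \<noteq> 0" using xV fin by (auto simp: card_eq_0_iff)
  ultimately have "real (card (V - {x})) = real (card V) - 1" by simp
  then show ?thesis unfolding degree_def N_S[OF x] cardV by simp
qed

lemma deg_A: "x \<in> A \<Longrightarrow> real (degree V (Hg V A B) x) = real k + real a - 1"
proof -
  assume x: "x \<in> A"
  have "V - B - {x} = S \<union> (A - {x})" using AB AV x by auto
  moreover have "card (S \<union> (A - {x})) = k + card (A - {x})" by (rule card_Un_disjoint) (use finS finA in auto)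
  moreover have "card (A - {x}) = a - 1" using x finA by simp
  moreover have "a \<noteq> 0" using x finA by (auto simp: card_eq_0_iff)
  ultimately show ?thesis unfolding degree_def N_A[OF x] by simp
qed

lemma deg_B: "x \<in> B \<Longrightarrow> real (degree V (Hg V A B) x) = real k + real b - 1"
proof -
  interpret BA: Hsetup V B A using fin AV BV AB by unfold_locales auto
  have e: "V - B - A = V - A - B" by auto
  assume "x \<in> B" then show ?thesis using BA.deg_A Hg_swap[of V A B] e by simp
qed

lemma sum3:
  fixes f :: "'a \<Rightarrow> real"
  assumes "finite P" "finite Q" "finite R" "P \<inter> Q = {}" "P \<inter> R = {}" "Q \<inter> R = {}"
  shows "sum f (P \<union> Q \<union> R) = sum f P + sum f Q + sum f R"
  using assms by (simp add: sum.union_disjoint Int_Un_distrib2)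

lemma ABC2_H:
  defines "s \<equiv> real k + real a + real b - 1" and "da \<equiv> real k + real a - 1" and "db \<equiv> real k + real b - 1"
  shows "ABC2 V (Hg V A B) = real k * ((real k - 1) * tt s s + real a * tt s da + real b * tt s db)
      + real a * (real k * tt da s + (real a - 1) * tt da da) + real b * (real k * tt db s + (real b - 1) * tt db db)"
proof -
  let ?G = "Hg V A B"
  let ?D = "\<lambda>x. real (degree V ?G x)"
  let ?in = "\<lambda>x. \<Sum>y\<in>N V ?G x. tt (?D x) (?D y)"
  have eV: "V = S \<union> A \<union> B" using AV BV by auto
  have DS: "\<And>x. x \<in> S \<Longrightarrow> ?D x = s" unfolding s_def using deg_S by simp
  have DA: "\<And>x. x \<in> A \<Longrightarrow> ?D x = da" unfolding da_def using deg_A by simp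
  have DB: "\<And>x. x \<in> B \<Longrightarrow> ?D x = db" unfolding db_def using deg_B by simp
  have cS: "?in x = (real k - 1) * tt s s + real a * tt s da + real b * tt s db" if x: "x \<in> S" for x
  proof -
    have "N V ?G x = (S - {x}) \<union> A \<union> B" unfolding N_S[OF x] using x AV BV by auto
    then have "?in x = (\<Sum>y\<in>S - {x}. tt (?D x) (?D y)) + (\<Sum>y\<in>A. tt (?D x) (?D y)) + (\<Sum>y\<in>B. tt (?D x) (?D y))"
      using sum3[of "S - {x}" A B] finS finA finB AB by auto
    also have "\<dots> = real (card (S - {x})) * tt s s + real a * tt s da + real b * tt s db"
      using DS DA DB x by simp
    also have "real (card (S - {x})) = real k - 1"
    proof -
      have "card (S - {x}) = k - 1" using x finS by simp
      moreover have "k > 0" using card_gt_0_iff x finS by blast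
      ultimately show ?thesis by simp
    qed
    finally show ?thesis .
  qed
  have cA: "?in x = real k * tt da s + (real a - 1) * tt da da" if x: "x \<in> A" for x
  proof -
    have "N V ?G x = S \<union> (A - {x})" unfolding N_A[OF x] using x AV AB by auto
    then have "?in x = (\<Sum>y\<in>S. tt (?D x) (?D y)) + (\<Sum>y\<in>A - {x}. tt (?D x) (?D y))"
      using sum.union_disjoint[of S "A - {x}"] finS finA by auto
    also have "\<dots> = real k * tt da s + real (card (A - {x})) * tt da da"
      using DS DA x by simp
    also have "real (card (A - {x})) = real a - 1"
    proof -
      have "card (A - {x}) = a - 1" using x finA by simp
      moreover have "a > 0" using card_gt_0_iff x finA by blast
      ultimately show ?thesis by simp
    qed
    finally show ?thesis .
  qed
  have cB: "?in x = real k * tt db s + (real b - 1) * tt db db" if x: "x \<in> B" for x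
  proof -
    have "N V ?G x = S \<union> (B - {x})" unfolding N_B[OF x] using x BV AB by auto
    then have "?in x = (\<Sum>y\<in>S. tt (?D x) (?D y)) + (\<Sum>y\<in>B - {x}. tt (?D x) (?D y))"
      using sum.union_disjoint[of S "B - {x}"] finS finB by auto
    also have "\<dots> = real k * tt db s + real (card (B - {x})) * tt db db"
      using DS DB x by simp
    also have "real (card (B - {x})) = real b - 1"
    proof -
      have "card (B - {x}) = b - 1" using x finB by simp
      moreover have "b > 0" using card_gt_0_iff x finB by blast
      ultimately show ?thesis by simp
    qed
    finally show ?thesis .
  qed
  have "ABC2 V ?G = (\<Sum>x\<in>S. ?in x) + (\<Sum>x\<in>A. ?in x) + (\<Sum>x\<in>B. ?in x)"
    unfolding ABC2_def by (subst eV, subst sum3) (use finS finA finB AB in auto)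
  also have "\<dots> = real k * ((real k - 1) * tt s s + real a * tt s da + real b * tt s db)
      + real a * (real k * tt da s + (real a - 1) * tt da da) + real b * (real k * tt db s + (real b - 1) * tt db db)"
    using cS cA cB by simp
  finally show ?thesis .
qed

lemma ABC2_H_phi:
  assumes k1: "k \<ge> 1" and a1: "a \<ge> 1" and b1: "b \<ge> 1"
  shows "ABC2 V (Hg V A B) = Fk k a b"
proof -
  define s where "s = real k + real a + real b - 1"
  define da where "da = real k + real a - 1"
  define db where "db = real k + real b - 1"
  have s0: "s > 0" and da0: "da > 0" and db0: "db > 0" unfolding s_def da_def db_def using k1 a1 b1 by auto
  have "phi (real k) s da = 2 * real k * real a * tt s da + real a * (real a - 1) * tt da da"
    unfolding phi_def Rf_tt[OF s0 da0] Tf_tt[OF da0] unfolding da_def by (simp add: algebra_simps)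
  moreover have "phi (real k) s db = 2 * real k * real b * tt s db + real b * (real b - 1) * tt db db"
    unfolding phi_def Rf_tt[OF s0 db0] Tf_tt[OF db0] unfolding db_def by (simp add: algebra_simps)
  moreover have "tt da s = tt s da" "tt db s = tt s db" using tt_sym by auto
  ultimately show ?thesis unfolding ABC2_H Fk_def s_def[symmetric] da_def[symmetric] db_def[symmetric]
    by (simp add: algebra_simps)
qed

end

lemma vc_ex:
  assumes "finite V"
  shows "\<exists>S\<subseteq>V. card S = vertex_connectivity V E \<and> (\<not> connected_on (V - S) E \<or> card (V - S) \<le> 1)"
proof -
  have "\<exists>k. \<exists>S\<subseteq>V. card S = k \<and> (\<not> connected_on (V - S) E \<or> card (V - S) \<le> 1)"
    by (rule exI[of _ "card V"]) auto
  then show ?thesis unfolding vertex_connectivity_def by (rule LeastI_ex)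
qed

lemma vc_le:
  assumes "S \<subseteq> V" "\<not> connected_on (V - S) E \<or> card (V - S) \<le> 1"
  shows "vertex_connectivity V E \<le> card S"
  unfolding vertex_connectivity_def by (rule Least_le) (use assms in blast)

lemma vc_min:
  assumes "S \<subseteq> V" "card S < vertex_connectivity V E"
  shows "connected_on (V - S) E \<and> card (V - S) \<ge> 2"
proof -
  have "\<not> (\<exists>T\<subseteq>V. card T = card S \<and> (\<not> connected_on (V - T) E \<or> card (V - T) \<le> 1))"
    using assms(2) unfolding vertex_connectivity_def by (rule not_less_Least)
  then show ?thesis using assms(1) by auto
qed

lemma path_stays:
  assumes "(\<lambda>x y. E x y \<and> x \<in> W \<and> y \<in> W)\<^sup>*\<^sup>* x y" "x \<in> A"
    and "\<And>z w. z \<in> A \<Longrightarrow> w \<in> W \<Longrightarrow> E z w \<Longrightarrow> w \<in> A"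
  shows "y \<in> A"
  using assms(1,2)
proof (induction rule: rtranclp_induct)
  case base then show ?case .
next
  case (step y z) then show ?case using assms(3) by blast
qed

lemma vc_H:
  assumes fin: "finite V" and AV: "A \<subseteq> V" and BV: "B \<subseteq> V" and AB: "A \<inter> B = {}"
    and A0: "A \<noteq> {}" and B0: "B \<noteq> {}"
  shows "vertex_connectivity V (Hg V A B) = card (V - A - B)"
proof -
  let ?S = "V - A - B"
  let ?G = "Hg V A B"
  have finS: "finite ?S" using fin by simp
  obtain x where x: "x \<in> A" using A0 by auto
  obtain y where y: "y \<in> B" using B0 by auto
  have le: "vertex_connectivity V ?G \<le> card ?S"
  proof (rule vc_le)
    show "?S \<subseteq> V" by auto
    have W: "V - ?S = A \<union> B" using AV BV by auto
    have "\<not> (\<lambda>u v. ?G u v \<and> u \<in> V - ?S \<and> v \<in> V - ?S)\<^sup>*\<^sup>* x y"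
    proof
      assume p: "(\<lambda>u v. ?G u v \<and> u \<in> V - ?S \<and> v \<in> V - ?S)\<^sup>*\<^sup>* x y"
      have "y \<in> A"
        by (rule path_stays[OF p x]) (use W in \<open>auto simp: Hg_def\<close>)
      then show False using y AB by auto
    qed
    then have "\<not> connected_on (V - ?S) ?G" unfolding connected_on_def using x y AV BV by auto
    then show "\<not> connected_on (V - ?S) ?G \<or> card (V - ?S) \<le> 1" ..
  qed
  have ge: "\<not> vertex_connectivity V ?G < card ?S"
  proof
    assume lt: "vertex_connectivity V ?G < card ?S"
    obtain T where T: "T \<subseteq> V" "card T = vertex_connectivity V ?G"
      "\<not> connected_on (V - T) ?G \<or> card (V - T) \<le> 1" using vc_ex[OF fin] by blast
    have finT: "finite T" using T(1) fin finite_subset by blast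
    obtain s where s: "s \<in> ?S" "s \<notin> T"
    proof -
      have "\<not> ?S \<subseteq> T"
      proof
        assume "?S \<subseteq> T"
        then have "card ?S \<le> card T" by (rule card_mono[OF finT])
        then show False using lt T(2) by simp
      qed
      then show ?thesis using that by blast
    qed
    have sW: "s \<in> V - T" using s by auto
    have conn: "connected_on (V - T) ?G"
      unfolding connected_on_def
    proof (intro conjI ballI)
      show "V - T \<noteq> {}" using sW by auto
      fix u v assume u: "u \<in> V - T" and v: "v \<in> V - T"
      let ?r = "\<lambda>x y. ?G x y \<and> x \<in> V - T \<and> y \<in> V - T"
      have us: "?r\<^sup>*\<^sup>* u s"
      proof (cases "u = s")
        case False
        then have "?r u s" using u sW s(1) unfolding Hg_def by auto
        then show ?thesis by blast
      qed simp
      have sv: "?r\<^sup>*\<^sup>* s v"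
      proof (cases "v = s")
        case False
        then have "?r s v" using v sW s(1) unfolding Hg_def by auto
        then show ?thesis by blast
      qed simp
      show "?r\<^sup>*\<^sup>* u v" using us sv by (rule rtranclp_trans)
    qed
    have "card (V - T) \<ge> 2"
    proof -
      have cV: "card V = card ?S + card A + card B"
      proof -
        interpret Hsetup V A B using fin AV BV AB by unfold_locales
        show ?thesis by (rule cardV)
      qed
      have "card A \<ge> 1" "card B \<ge> 1" using A0 B0 fin AV BV finite_subset
        by (auto simp: Suc_le_eq card_gt_0_iff)
      moreover have "card (V - T) = card V - card T" using T(1) finT by (simp add: card_Diff_subset)
      ultimately show ?thesis using cV lt T(2) by simp
    qed
    then show False using T(3) conn by simp
  qed
  from le ge show ?thesis by simp
qed

lemma bij_shift: "bij_betw (\<lambda>i. k + i) {0..<m} {k..<k+m::nat}"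
  unfolding bij_betw_def inj_on_def by (auto simp: image_iff)

lemma iso_K:
  assumes fin: "finite V" and x0: "x0 \<in> V" and BV: "B \<subseteq> V" and x0B: "x0 \<notin> B"
    and kS: "card (V - {x0} - B) = k" and nV: "card V = n"
  shows "graph_iso V (Hg V {x0} B) {0..<n} (Knk n k)"
proof -
  define S where "S = V - {x0} - B"
  have finS: "finite S" and finB: "finite B" unfolding S_def using fin BV finite_subset by auto
  obtain g where g: "bij_betw g S {0..<card S}" using ex_bij_betw_finite_nat[OF finS] by blast
  obtain h where h: "bij_betw h B {0..<card B}" using ex_bij_betw_finite_nat[OF finB] by blast
  have eV: "V = S \<union> ({x0} \<union> B)" unfolding S_def using x0 BV by auto
  have cn: "n = k + 1 + card B"
  proof -
    have "card (S \<union> ({x0} \<union> B)) = card S + card ({x0} \<union> B)"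
      by (rule card_Un_disjoint) (use finS finB S_def in auto)
    also have "card ({x0} \<union> B) = 1 + card B" using finB x0B by simp
    finally show ?thesis using nV kS eV unfolding S_def by simp
  qed
  define f where "f z = (if z \<in> S then g z else if z = x0 then n - 1 else k + h z)" for z
  have kS': "card S = k" unfolding S_def using kS .
  have b1: "bij_betw f S {0..<k}" using g kS' by (rule_tac bij_betw_cong[THEN iffD1, of S g f]) (auto simp: f_def)
  have b2: "bij_betw f B {k..<k + card B}"
  proof -
    have "bij_betw ((\<lambda>i. k + i) \<circ> h) B {k..<k + card B}" by (rule bij_betw_trans[OF h bij_shift])
    moreover have "\<And>z. z \<in> B \<Longrightarrow> f z = ((\<lambda>i. k + i) \<circ> h) z" unfolding f_def S_def using x0B by auto
    ultimately show ?thesis using bij_betw_cong by blast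
  qed
  have b3: "bij_betw f {x0} {n - 1}" unfolding f_def S_def by (simp add: bij_betw_def)
  have b23: "bij_betw f ({x0} \<union> B) ({n - 1} \<union> {k..<k + card B})"
    by (rule bij_betw_combine[OF b3 b2]) (use cn in auto)
  have bf: "bij_betw f V ({0..<k} \<union> ({n - 1} \<union> {k..<k + card B}))"
    unfolding eV by (rule bij_betw_combine[OF b1 b23]) (use cn in auto)
  have eN: "{0..<k} \<union> ({n - 1} \<union> {k..<k + card B}) = {0..<n}" using cn by auto
  have bij: "bij_betw f V {0..<n}" using bf unfolding eN .
  have inj: "inj_on f V" using bij bij_betw_def by blast
  have fS: "z \<in> S \<Longrightarrow> f z < k" for z using b1 bij_betwE by fastforce
  have fB: "z \<in> B \<Longrightarrow> k \<le> f z \<and> f z < n - 1" for z using b2 bij_betwE cn by fastforce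
  have fx: "f x0 = n - 1" unfolding f_def S_def by simp
  have fV: "z \<in> V \<Longrightarrow> f z < n" for z using bij bij_betwE by fastforce
  have adj: "Hg V {x0} B u v \<longleftrightarrow> Knk n k (f u) (f v)" if u: "u \<in> V" and v: "v \<in> V" for u v
  proof -
    have feq: "f u = f v \<longleftrightarrow> u = v" using inj u v inj_on_eq_iff by metis
    have cu: "u \<in> S \<or> u = x0 \<or> u \<in> B" and cv: "v \<in> S \<or> v = x0 \<or> v \<in> B" using u v unfolding S_def by auto
    have notx: "z \<in> B \<Longrightarrow> z \<noteq> x0" "z \<in> S \<Longrightarrow> z \<noteq> x0" "z \<in> S \<Longrightarrow> z \<notin> B" for z unfolding S_def using x0B by auto
    have Fu: "(u \<in> S \<longrightarrow> f u < k) \<and> (u \<in> B \<longrightarrow> k \<le> f u \<and> f u < n - 1)" using fS fB by blast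
    have Fv: "(v \<in> S \<longrightarrow> f v < k) \<and> (v \<in> B \<longrightarrow> k \<le> f v \<and> f v < n - 1)" using fS fB by blast
    have n1: "n \<ge> 1" using cn by simp
    from cu cv show ?thesis
      unfolding Hg_def Knk_def using Fu Fv fx fV[OF u] fV[OF v] feq u v notx n1
      by (elim disjE) auto
  qed
  show ?thesis unfolding graph_iso_def using bij adj by blast
qed

theorem corollary2:
  fixes V :: "'a set" and E :: "'a \<Rightarrow> 'a \<Rightarrow> bool" and n k :: nat
  assumes "k \<ge> 1"
    and "simple_graph V E" and "card V = n" and "vertex_connectivity V E = k"
    and "\<forall>(V' :: 'a set) E'. simple_graph V' E' \<and> card V' = n \<and> vertex_connectivity V' E' = k
           \<longrightarrow> ABC V' E' \<le> ABC V E"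
  shows "graph_iso V E {0..<n} (Knk n k)"
proof -
  note k1 = assms(1) and sg = assms(2) and nV = assms(3) and vc = assms(4) and maxi = assms(5)
  have fin: "finite V" using sg_finite[OF sg] .
  have c0: "connected_on V E \<and> card V \<ge> 2" using vc_min[of "{}" V E] vc k1 by simp
  then have conn: "connected_on V E" and n2: "n \<ge> 2" using nV by auto
  let ?r = "\<lambda>x y. E x y \<and> x \<in> V \<and> y \<in> V"
  have deg1: "degree V E x \<ge> 1" if x: "x \<in> V" for x
  proof -
    have "\<exists>y\<in>V. y \<noteq> x"
    proof (rule ccontr)
      assume "\<not> (\<exists>y\<in>V. y \<noteq> x)"
      then have "V \<subseteq> {x}" by auto
      then have "card V \<le> 1" using card_mono[of "{x}" V] by simp
      then show False using n2 nV by simp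
    qed
    then obtain y where y: "y \<in> V" "y \<noteq> x" by blast
    have "?r\<^sup>*\<^sup>* x y" using conn x y unfolding connected_on_def by simp
    then obtain z where "?r x z" using y(2) by (cases rule: converse_rtranclpE) auto
    then have "E z x" using sg_sym[OF sg] by blast
    then show ?thesis by (rule degree_pos[OF sg])
  qed
  have Vne: "V \<noteq> {}"
  proof
    assume e: "V = {}"
    have "card V = 0" unfolding e by simp
    then show False using n2 nV by simp
  qed
  then obtain x0 where x0: "x0 \<in> V" by blast
  have kn: "k \<le> n - 1"
  proof -
    have "V - (V - {x0}) = {x0}" using x0 by auto
    then have "vertex_connectivity V E \<le> card (V - {x0})" by (intro vc_le) auto
    then show ?thesis using vc nV x0 fin by simp
  qed
  obtain T where T: "T \<subseteq> V" "card T = k" "\<not> connected_on (V - T) E \<or> card (V - T) \<le> 1"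
    using vc_ex[OF fin, of E] vc by blast
  have finT: "finite T" using T(1) fin finite_subset by blast
  have cVT: "card (V - T) = n - k" using T finT nV by (simp add: card_Diff_subset)
  show ?thesis
  proof (cases "\<forall>u\<in>V. \<forall>v\<in>V. u \<noteq> v \<longrightarrow> E u v")
    case True
    have EH: "E = Hg V {x0} {}"
    proof (intro ext)
      fix u v
      show "E u v = Hg V {x0} {} u v"
        unfolding Hg_def using True sg_in[OF sg, of u v] sg_irrefl[OF sg, of u] by auto
    qed
    have "k = n - 1"
    proof (rule ccontr)
      assume "k \<noteq> n - 1"
      then have lt: "k < n - 1" using kn by simp
      then have "card (V - T) \<ge> 2" using cVT by simp
      moreover have "connected_on (V - T) E"
        unfolding connected_on_def
      proof (intro conjI ballI)
        show "V - T \<noteq> {}"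
        proof
          assume e: "V - T = {}"
          have "card (V - T) = 0" unfolding e by simp
          then have "n - k = 0" using cVT by simp
          then show False using lt by simp
        qed
        fix u v assume "u \<in> V - T" "v \<in> V - T"
        then show "(\<lambda>x y. E x y \<and> x \<in> V - T \<and> y \<in> V - T)\<^sup>*\<^sup>* u v"
          using True by (cases "u = v") auto
      qed
      ultimately show False using T(3) by simp
    qed
    moreover have "card (V - {x0} - {}) = n - 1" using x0 fin nV by simp
    ultimately show ?thesis unfolding EH using iso_K[OF fin x0, of "{}" k n] nV by simp
  next
    case False
    then obtain u v where uv: "u \<in> V" "v \<in> V" "u \<noteq> v" "\<not> E u v" by blast
    have kn2: "k \<le> n - 2"
    proof -
      have e: "V - (V - {u, v}) = {u, v}" using uv by auto
      have "\<not> connected_on {u, v} E"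
      proof
        assume "connected_on {u, v} E"
        then have p: "(\<lambda>x y. E x y \<and> x \<in> {u, v} \<and> y \<in> {u, v})\<^sup>*\<^sup>* u v" unfolding connected_on_def by simp
        have "v \<in> {u}"
          by (rule path_stays[OF p]) (use uv sg_irrefl[OF sg] in auto)
        then show False using uv by simp
      qed
      then have "vertex_connectivity V E \<le> card (V - {u, v})" by (intro vc_le) (auto simp: e)
      moreover have "card (V - {u, v}) = n - 2" using uv fin nV by (simp add: card_Diff_subset)
      ultimately show ?thesis using vc by simp
    qed
    have c2: "card (V - T) \<ge> 2" using cVT kn2 n2 by simp
    have nc: "\<not> connected_on (V - T) E" using T(3) c2 by auto
    have VTne: "V - T \<noteq> {}"
    proof
      assume e: "V - T = {}"
      have "card (V - T) = 0" unfolding e by simp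
      with c2 show False by simp
    qed
    let ?W = "V - T"
    let ?q = "\<lambda>x y. E x y \<and> x \<in> ?W \<and> y \<in> ?W"
    obtain x y where xy: "x \<in> ?W" "y \<in> ?W" "\<not> ?q\<^sup>*\<^sup>* x y"
      using nc VTne unfolding connected_on_def by blast
    define A where "A = {z \<in> ?W. ?q\<^sup>*\<^sup>* x z}"
    define B where "B = ?W - A"
    have xA: "x \<in> A" unfolding A_def using xy by simp
    have yB: "y \<in> B" unfolding B_def A_def using xy by simp
    have AV: "A \<subseteq> V" and BV: "B \<subseteq> V" and AB: "A \<inter> B = {}" unfolding A_def B_def by auto
    have SAB: "V - A - B = T" using T(1) unfolding A_def B_def by auto
    interpret HS: Hsetup V A B using fin AV BV AB by unfold_locales
    have closed: "w \<in> A" if z: "z \<in> A" and w: "w \<in> ?W" and Ezw: "E z w" for z w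
    proof -
      have p: "?q\<^sup>*\<^sup>* x z" and zW: "z \<in> ?W" using z unfolding A_def by auto
      have q: "?q z w" using zW w Ezw by simp
      have "?q\<^sup>*\<^sup>* x w" by (rule rtranclp.rtrancl_into_rtrancl[OF p q])
      then show ?thesis unfolding A_def using w by simp
    qed
    have EleH: "Hg V A B z w" if Ezw: "E z w" for z w
    proof -
      have zw: "z \<in> V" "w \<in> V" "z \<noteq> w" using sg_in[OF sg Ezw] sg_irrefl[OF sg] Ezw by auto
      have "\<not> (z \<in> A \<and> w \<in> B)" using closed Ezw unfolding B_def by blast
      moreover have "\<not> (z \<in> B \<and> w \<in> A)" using closed sg_sym[OF sg Ezw] unfolding B_def by blast
      ultimately show ?thesis unfolding Hg_def using zw by simp
    qed
    \<comment> \<open>the comparison graph K_n(k) on V\<close>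
    define B' where "B' = ?W - {x}"
    have yB': "y \<in> B'" unfolding B'_def using xy yB xA AB by auto
    have B'V: "B' \<subseteq> V" unfolding B'_def by auto
    have SB': "V - {x} - B' = T" unfolding B'_def using T(1) xy by auto
    have xV: "x \<in> V" using xy by simp
    have xB': "x \<notin> B'" unfolding B'_def by simp
    interpret HK: Hsetup V "{x}" B' using fin xV B'V xB' by unfold_locales simp_all
    have "vertex_connectivity V (Hg V {x} B') = card (V - {x} - B')"
      by (rule vc_H[OF fin _ B'V]) (use xV xB' yB' in auto)
    then have vcK: "vertex_connectivity V (Hg V {x} B') = k" using SB' T(2) by simp
    have "simple_graph V (Hg V {x} B') \<and> card V = n \<and> vertex_connectivity V (Hg V {x} B') = k"
      using Hg_sg[OF fin] nV vcK by blast
    then have "ABC V (Hg V {x} B') \<le> ABC V E" by (rule maxi[rule_format])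
    then have K_le: "ABC2 V (Hg V {x} B') \<le> ABC2 V E" using ABC_eq[OF fin] by simp
    have finW: "finite ?W" using fin by simp
    have "card A > 0" using xA HS.finA card_gt_0_iff by blast
    then have a1: "card A \<ge> 1" by simp
    have "card B > 0" using yB HS.finB card_gt_0_iff by blast
    then have b1: "card B \<ge> 1" by simp
    have cB': "card B' = card A + card B - 1"
    proof -
      have "card ?W = card A + card B"
      proof -
        have "?W = A \<union> B" unfolding A_def B_def by auto
        then show ?thesis using AB HS.finA HS.finB by (simp add: card_Un_disjoint)
      qed
      then show ?thesis unfolding B'_def using xy finW by simp
    qed
    have HABC: "ABC2 V (Hg V A B) = Fk k (card A) (card B)"
      using HS.ABC2_H_phi k1 a1 b1 SAB T(2) by simp
    have KABC: "ABC2 V (Hg V {x} B') = Fk k 1 (card A + card B - 1)"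
      using HK.ABC2_H_phi[of] k1 SB' T(2) cB' a1 b1 by simp
    have EH: "E = Hg V A B"
    proof (rule ccontr)
      assume ne: "E \<noteq> Hg V A B"
      have "ABC2 V E < ABC2 V (Hg V A B)"
        by (rule ABC2_mono[OF sg Hg_sg[OF fin] EleH deg1 ne])
      moreover have "ABC2 V (Hg V A B) \<le> ABC2 V (Hg V {x} B')"
        unfolding HABC KABC by (rule Fk_ineq(1)[OF k1 a1 b1])
      ultimately show False using K_le by simp
    qed
    have ab: "card A = 1 \<or> card B = 1"
    proof (rule ccontr)
      assume "\<not> (card A = 1 \<or> card B = 1)"
      then have "card A \<ge> 2" "card B \<ge> 2" using a1 b1 by auto
      then have "ABC2 V (Hg V A B) < ABC2 V (Hg V {x} B')"
        unfolding HABC KABC by (rule Fk_ineq(2)[OF k1 a1 b1])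
      then show False using K_le EH by simp
    qed
    then show ?thesis
    proof
      assume "card A = 1"
      then obtain z where z: "A = {z}" by (auto simp: card_Suc_eq)
      have "z \<in> V" "z \<notin> B" using z AV AB by auto
      moreover have "card (V - {z} - B) = k" using SAB z T(2) by simp
      ultimately show ?thesis unfolding EH z using iso_K[OF fin _ BV] nV by blast
    next
      assume "card B = 1"
      then obtain z where z: "B = {z}" by (auto simp: card_Suc_eq)
      have "z \<in> V" "z \<notin> A" using z BV AB by auto
      moreover have "card (V - {z} - A) = k" using SAB z T(2) by (metis Diff_insert Diff_insert2)
      ultimately show ?thesis unfolding EH z Hg_swap[of V A] using iso_K[OF fin _ AV] nV by blast
    qed
  qed
qed

end
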